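(* Let $\theta>0$, $\lambda>0$, $\mu>0$ with $\lambda<\mu+1$. For $\alpha\ge 0$, $d\ge 0$ let $$\pi(\alpha,d)=(\theta+\mu)\alpha-\frac{\alpha^2}{2}-\frac{\alpha}{\alpha+d}\,\lambda\alpha\theta-d ,$$ let $\Pi(\alpha;\theta)=\max_{d\ge0}\pi(\alpha,d)$ for $\alpha>0$, and let $\alpha^*(\theta)$ be the maximizer of $\Pi(\cdot;\theta)$ over $\alpha>0$, namely $\alpha^*(\theta)=\mu+\theta(1-\lambda)$ if $\lambda\theta\le1$ and $\alpha^*(\theta)=\theta+\mu+1-2\sqrt{\lambda\theta}$ if $\lambda\theta>1$. Let $\alpha^0=\theta+\mu$ and $\Delta(\theta)=\alpha^0-\alpha^*(\theta)$. Then $$\Delta(\theta)=\begin{cases}\lambda\theta, & \lambda\theta\le 1,\\ 2\sqrt{\lambda\theta}-1, & \lambda\theta>1.\end{cases}$$ Moreover, $\Delta$ is continuously differentiable in $\theta$ at $\theta=1/\lambda$, is increasing in $\lambda$ and in $\theta$, and does not depend on $\mu$.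
   Context: $\alpha$ is AI deployment, $d$ security investment, $\theta$ AI capability, $\lambda$ breach-loss magnitude, $\mu$ organizational readiness. Breach probability is $\alpha/(\alpha+d)$ and breach damage $\lambda\alpha\theta$. $\alpha^0=\theta+\mu$ is the deployment that maximizes $(\theta+\mu)\alpha-\alpha^2/2$ (no-risk benchmark); $\Delta$ is called the security discount. *)

theory Defs
  imports "HOL-Analysis.Analysis"
begin

definition payoff :: "real \<Rightarrow> real \<Rightarrow> real \<Rightarrow> real \<Rightarrow> real \<Rightarrow> real" where
  "payoff theta lam mu alpha d =
     (theta + mu) * alpha - alpha^2 / 2 - alpha / (alpha + d) * (lam * alpha * theta) - d"

definition alpha0 :: "real \<Rightarrow> real \<Rightarrow> real" where
  "alpha0 theta mu = theta + mu"

text \<open>Optimal deployment alpha*(theta), as given explicitly in the statement.\<close>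
definition alpha_star :: "real \<Rightarrow> real \<Rightarrow> real \<Rightarrow> real" where
  "alpha_star lam mu theta =
     (if lam * theta \<le> 1 then mu + theta * (1 - lam)
      else theta + mu + 1 - 2 * sqrt (lam * theta))"

definition Delta :: "real \<Rightarrow> real \<Rightarrow> real \<Rightarrow> real" where
  "Delta lam mu theta = alpha0 theta mu - alpha_star lam mu theta"

end

theory Submission
  imports Defs
begin

definition FF :: "real \<Rightarrow> real" where
  "FF x = (if x \<in> {..1} then x else 2 * sqrt x - 1)"

definition FF' :: "real \<Rightarrow> real" where
  "FF' x = (if x \<in> {..1} then 1 else 1 / sqrt x)"

lemma FF'_alt: "FF' x = 1 / sqrt (max 1 x)"
  by (simp add: FF'_def max_def)

lemma FF_deriv: "(FF has_real_derivative FF' x) (at x)"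
proof -
  have "((\<lambda>x. if x \<in> {..1} then x else 2 * sqrt x - 1) has_vector_derivative
    (if x \<in> {..1} then 1 else 1 / sqrt x)) (at x within UNIV)"
  proof (rule has_vector_derivative_If_within_closures[where f' = "\<lambda>_. 1" and g' = "\<lambda>x. 1 / sqrt x"])
    show "x \<in> {..1} \<union> {1<..}" by auto
    show "UNIV = {..1::real} \<union> {1<..}" by auto
    show "((\<lambda>x. x) has_vector_derivative 1) (at x within {..1} \<union> (closure {..1} \<inter> closure {1<..}))"
      by (rule has_vector_derivative_id)
  next
    assume "x \<in> {1<..} \<union> (closure {..1} \<inter> closure {1<..})"
    then have x1: "x \<ge> 1" by auto
    have "(sqrt has_real_derivative inverse (sqrt x) / 2) (at x)"
      using x1 by (intro DERIV_real_sqrt) auto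
    then have "((\<lambda>x. 2 * sqrt x - 1) has_real_derivative 2 * (inverse (sqrt x) / 2) - 0) (at x)"
      by (intro DERIV_diff DERIV_cmult DERIV_const)
    then have "((\<lambda>x. 2 * sqrt x - 1) has_real_derivative 1 / sqrt x) (at x)"
      by (simp add: field_simps)
    then show "((\<lambda>x. 2 * sqrt x - 1) has_vector_derivative 1 / sqrt x)
      (at x within {1<..} \<union> (closure {..1} \<inter> closure {1<..}))"
      using has_real_derivative_iff_has_vector_derivative has_field_derivative_at_within by blast
  next
    assume "x \<in> closure {..1}" "x \<in> closure {1<..}"
    then have "x = 1" by auto
    then show "x = 2 * sqrt x - 1" and "1 = 1 / sqrt x" by auto
  qed
  then show ?thesis
    unfolding FF_def FF'_def has_real_derivative_iff_has_vector_derivative by simp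
qed

lemma FF_mono: "a < b \<Longrightarrow> FF a < FF b"
proof -
  assume ab: "a < b"
  show ?thesis
  proof (cases "b \<le> 1")
    case True then show ?thesis using ab by (simp add: FF_def)
  next
    case False
    then have sb: "sqrt b > 1" by simp
    show ?thesis
    proof (cases "a \<le> 1")
      case True
      have "a < 2 * sqrt b - 1" using True sb by linarith
      then show ?thesis using True False by (simp add: FF_def)
    next
      case f2: False
      then have "sqrt a < sqrt b" using ab by simp
      then show ?thesis using False f2 by (simp add: FF_def)
    qed
  qed
qed

lemma Delta_eq: "Delta lam mu = (\<lambda>t. FF (lam * t))"
  by (rule ext) (simp add: Delta_def alpha0_def alpha_star_def FF_def algebra_simps)

theorem proposition2:
  fixes theta lam mu :: real
  assumes "theta > 0" and "lam > 0" and "mu > 0" and "lam < mu + 1"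
  shows "Delta lam mu theta = (if lam * theta \<le> 1 then lam * theta else 2 * sqrt (lam * theta) - 1)
    \<and> ((\<exists>e>0. \<forall>t. \<bar>t - 1 / lam\<bar> < e \<longrightarrow> Delta lam mu differentiable (at t))
         \<and> isCont (deriv (Delta lam mu)) (1 / lam))
    \<and> (\<forall>l1 l2. 0 < l1 \<longrightarrow> l1 < l2 \<longrightarrow> l2 < mu + 1 \<longrightarrow> Delta l1 mu theta < Delta l2 mu theta)
    \<and> (\<forall>t1 t2. 0 < t1 \<longrightarrow> t1 < t2 \<longrightarrow> Delta lam mu t1 < Delta lam mu t2)
    \<and> (\<forall>m1 m2. 0 < m1 \<longrightarrow> 0 < m2 \<longrightarrow> lam < m1 + 1 \<longrightarrow> lam < m2 + 1 \<longrightarrow>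
           Delta lam m1 theta = Delta lam m2 theta)"
proof -
  have D: "\<And>t. (Delta lam mu has_real_derivative lam * FF' (lam * t)) (at t)"
  proof -
    fix t
    have "((\<lambda>t. FF (lam * t)) has_real_derivative FF' (lam * t) * (lam * 1)) (at t)"
      by (rule DERIV_chain2[OF FF_deriv]) (rule DERIV_cmult[OF DERIV_ident])
    then show "(Delta lam mu has_real_derivative lam * FF' (lam * t)) (at t)"
      by (simp add: Delta_eq mult.commute)
  qed
  have dd: "deriv (Delta lam mu) = (\<lambda>t. lam * (1 / sqrt (max 1 (lam * t))))"
  proof
    fix t show "deriv (Delta lam mu) t = lam * (1 / sqrt (max 1 (lam * t)))"
      using D[of t] DERIV_imp_deriv FF'_alt by metis
  qed
  have c: "isCont (deriv (Delta lam mu)) (1 / lam)"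
    unfolding dd using assms by (intro continuous_intros) auto
  have e: "\<exists>e>0. \<forall>t. \<bar>t - 1 / lam\<bar> < e \<longrightarrow> Delta lam mu differentiable (at t)"
    using D real_differentiable_def by (intro exI[of _ 1]) auto
  have l: "\<forall>l1 l2. 0 < l1 \<longrightarrow> l1 < l2 \<longrightarrow> l2 < mu + 1 \<longrightarrow> Delta l1 mu theta < Delta l2 mu theta"
    using assms by (auto simp: Delta_eq intro!: FF_mono)
  have t: "\<forall>t1 t2. 0 < t1 \<longrightarrow> t1 < t2 \<longrightarrow> Delta lam mu t1 < Delta lam mu t2"
    using assms by (auto simp: Delta_eq intro!: FF_mono)
  show ?thesis using c e l t by (simp add: Delta_eq FF_def)
qed

end
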